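(* Let $\mathbf{s}=\{1/n : n\in\mathbb{N}\}\cup\{0\}\subset\mathbb{R}$. Then the free locally convex space $L(\mathbf{s})$ is topologically isomorphic (as a locally convex space) to the Graev free locally convex space $L_G(\mathbf{s})$; more precisely, with $\mathbf{s}^\ast=\mathbf{s}\setminus\{1\}$, one has $L_G(\mathbf{s})\cong L_G(\{1\})\oplus L_G(\mathbf{s}^\ast)\cong\mathbb{R}\oplus L_G(\mathbf{s})\cong L(\mathbf{s})$.
   Context: All vector spaces are real. For a Tychonoff space $X$, the free locally convex space $L(X)$ is a locally convex space with a continuous map $i:X\to L(X)$ such that every continuous map $f$ from $X$ into a locally convex space $E$ extends uniquely to a continuous linear $\bar f:L(X)\to E$ with $f=\bar f\circ i$. For a Tychonoff space $X$ with distinguished point $e$, the Graev free locally convex space $L_G(X)$ is a locally convex space with a continuous map $i:X\to L_G(X)$, $i(e)=0$, such that every continuous map $f$ from $X$ into a locally convex space $E$ with $f(e)=0$ extends uniquely to a continuous linear $\bar f:L_G(X)\to E$ with $f=\bar f\circ i$; it is independent of the choice of $e$ up to isomorphism, and algebraically it is the free vector space on $X\setminus\{e\}$. It is known that $L(X)\cong\mathbb{R}\oplus L_G(X)$ for every Tychonoff $X$, and that $L_G$ of a topological disjoint union of two spaces is the direct sum of the $L_G$'s. *)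

theory Defs
  imports "HOL-Analysis.Analysis"
begin

text \<open>The underlying vector space is the
  space of finitely supported real functions on a set A of generators; the topology
  is the finest locally convex topology making the canonical map \<iota> continuous,
  i.e. the one generated by all seminorms p for which \<iota> is continuous into (V,p).\<close>

definition fsupp_space :: "'a set \<Rightarrow> ('a \<Rightarrow> real) set" where
  "fsupp_space A = {f. finite {x. f x \<noteq> 0} \<and> {x. f x \<noteq> 0} \<subseteq> A}"

definition fdiff :: "('a \<Rightarrow> real) \<Rightarrow> ('a \<Rightarrow> real) \<Rightarrow> ('a \<Rightarrow> real)" where
  "fdiff f g = (\<lambda>x. f x - g x)"

definition fadd :: "('a \<Rightarrow> real) \<Rightarrow> ('a \<Rightarrow> real) \<Rightarrow> ('a \<Rightarrow> real)" where
  "fadd f g = (\<lambda>x. f x + g x)"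

definition fscale :: "real \<Rightarrow> ('a \<Rightarrow> real) \<Rightarrow> ('a \<Rightarrow> real)" where
  "fscale c f = (\<lambda>x. c * f x)"

definition seminorm_on :: "('a \<Rightarrow> real) set \<Rightarrow> (('a \<Rightarrow> real) \<Rightarrow> real) \<Rightarrow> bool" where
  "seminorm_on V p \<longleftrightarrow>
     (\<forall>f\<in>V. \<forall>g\<in>V. p (fadd f g) \<le> p f + p g) \<and>
     (\<forall>f\<in>V. \<forall>c. p (fscale c f) = \<bar>c\<bar> * p f)"

definition delta :: "'a \<Rightarrow> ('a \<Rightarrow> real)" where
  "delta x = (\<lambda>y. if y = x then 1 else 0)"

definition graev_delta :: "'a \<Rightarrow> 'a \<Rightarrow> ('a \<Rightarrow> real)" where
  "graev_delta e x = (if x = e then (\<lambda>y. 0) else delta x)"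

definition lc_seminorm ::
  "'a topology \<Rightarrow> ('a \<Rightarrow> real) set \<Rightarrow> ('a \<Rightarrow> ('a \<Rightarrow> real)) \<Rightarrow> (('a \<Rightarrow> real) \<Rightarrow> real) \<Rightarrow> bool" where
  "lc_seminorm X V \<iota> p \<longleftrightarrow> seminorm_on V p \<and>
     (\<forall>x\<in>topspace X. continuous_map X euclideanreal (\<lambda>y. p (fdiff (\<iota> y) (\<iota> x))))"

text \<open>The finest locally convex topology on V making \<iota> continuous (the family of such
  seminorms is closed under max, so single seminorm balls form a neighbourhood base).\<close>
definition lc_topology ::
  "'a topology \<Rightarrow> ('a \<Rightarrow> real) set \<Rightarrow> ('a \<Rightarrow> ('a \<Rightarrow> real)) \<Rightarrow> ('a \<Rightarrow> real) topology" where
  "lc_topology X V \<iota> = topology (\<lambda>U. U \<subseteq> V \<and>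
     (\<forall>f\<in>U. \<exists>p \<epsilon>. lc_seminorm X V \<iota> p \<and> \<epsilon> > 0 \<and> {g\<in>V. p (fdiff g f) < \<epsilon>} \<subseteq> U))"

definition free_lcs_carrier :: "'a topology \<Rightarrow> ('a \<Rightarrow> real) set" where
  "free_lcs_carrier X = fsupp_space (topspace X)"

definition free_lcs :: "'a topology \<Rightarrow> ('a \<Rightarrow> real) topology" where
  "free_lcs X = lc_topology X (free_lcs_carrier X) delta"

definition graev_lcs_carrier :: "'a topology \<Rightarrow> 'a \<Rightarrow> ('a \<Rightarrow> real) set" where
  "graev_lcs_carrier X e = fsupp_space (topspace X - {e})"

definition graev_lcs :: "'a topology \<Rightarrow> 'a \<Rightarrow> ('a \<Rightarrow> real) topology" where
  "graev_lcs X e = lc_topology X (graev_lcs_carrier X e) (graev_delta e)"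

definition linear_on :: "('a \<Rightarrow> real) set \<Rightarrow> (('a \<Rightarrow> real) \<Rightarrow> ('b \<Rightarrow> real)) \<Rightarrow> bool" where
  "linear_on V T \<longleftrightarrow> (\<forall>f\<in>V. \<forall>g\<in>V. T (fadd f g) = fadd (T f) (T g)) \<and>
                      (\<forall>f\<in>V. \<forall>c. T (fscale c f) = fscale c (T f))"

definition lcs_isomorphic ::
  "('a \<Rightarrow> real) set \<Rightarrow> ('a \<Rightarrow> real) topology \<Rightarrow> ('b \<Rightarrow> real) set \<Rightarrow> ('b \<Rightarrow> real) topology \<Rightarrow> bool" where
  "lcs_isomorphic V1 T1 V2 T2 \<longleftrightarrow>
     (\<exists>T. linear_on V1 T \<and> bij_betw T V1 V2 \<and> homeomorphic_map T1 T2 T)"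

definition conv_seq :: "real set" where
  "conv_seq = insert 0 {1 / real n | n. n \<ge> 1}"

end

theory Submission
  imports Defs
begin


lemma fadd_fscale_fdiff: "fdiff g f = fadd g (fscale (-1) f)"
  by (auto simp: fdiff_def fadd_def fscale_def)

lemma fsupp_add: "f \<in> fsupp_space A \<Longrightarrow> g \<in> fsupp_space A \<Longrightarrow> fadd f g \<in> fsupp_space A"
proof -
  assume f: "f \<in> fsupp_space A" and g: "g \<in> fsupp_space A"
  have "{x. fadd f g x \<noteq> 0} \<subseteq> {x. f x \<noteq> 0} \<union> {x. g x \<noteq> 0}" by (auto simp: fadd_def)
  with f g show ?thesis unfolding fsupp_space_def by (auto intro: finite_subset)
qed

lemma fsupp_scale: "f \<in> fsupp_space A \<Longrightarrow> fscale c f \<in> fsupp_space A"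
proof -
  assume f: "f \<in> fsupp_space A"
  have "{x. fscale c f x \<noteq> 0} \<subseteq> {x. f x \<noteq> 0}" by (auto simp: fscale_def)
  with f show ?thesis unfolding fsupp_space_def by (auto intro: finite_subset)
qed

lemma fsupp_diff: "f \<in> fsupp_space A \<Longrightarrow> g \<in> fsupp_space A \<Longrightarrow> fdiff f g \<in> fsupp_space A"
  by (simp add: fadd_fscale_fdiff fsupp_add fsupp_scale)

lemma lc_max:
  assumes "lc_seminorm X V \<iota> p" "lc_seminorm X V \<iota> q"
  shows "lc_seminorm X V \<iota> (\<lambda>f. max (p f) (q f))"
proof -
  have sp: "seminorm_on V p" and sq: "seminorm_on V q" using assms by (auto simp: lc_seminorm_def)
  have "seminorm_on V (\<lambda>f. max (p f) (q f))"
    unfolding seminorm_on_def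
  proof (intro conjI ballI allI)
    fix f g assume "f \<in> V" "g \<in> V"
    then have "p (fadd f g) \<le> p f + p g" "q (fadd f g) \<le> q f + q g"
      using sp sq by (auto simp: seminorm_on_def)
    then show "max (p (fadd f g)) (q (fadd f g)) \<le> max (p f) (q f) + max (p g) (q g)" by linarith
  next
    fix f c assume "f \<in> V"
    then have "p (fscale c f) = \<bar>c\<bar> * p f" "q (fscale c f) = \<bar>c\<bar> * q f"
      using sp sq by (auto simp: seminorm_on_def)
    then show "max (p (fscale c f)) (q (fscale c f)) = \<bar>c\<bar> * max (p f) (q f)"
      by (simp add: max_mult_distrib_left)
  qed
  moreover have "\<forall>x\<in>topspace X. continuous_map X euclideanreal
      (\<lambda>y. max (p (fdiff (\<iota> y) (\<iota> x))) (q (fdiff (\<iota> y) (\<iota> x))))"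
    using assms by (auto simp: lc_seminorm_def intro!: continuous_map_real_max)
  ultimately show ?thesis by (simp add: lc_seminorm_def)
qed

lemma lc_zero: "lc_seminorm X V \<iota> (\<lambda>f. 0)"
  by (simp add: lc_seminorm_def seminorm_on_def)

definition lcP where "lcP X V \<iota> U \<longleftrightarrow> U \<subseteq> V \<and>
     (\<forall>f\<in>U. \<exists>p \<epsilon>. lc_seminorm X V \<iota> p \<and> \<epsilon> > 0 \<and> {g\<in>V. p (fdiff g f) < \<epsilon>} \<subseteq> U)"

lemma istop_lcP: "istopology (lcP X V \<iota>)"
  unfolding istopology_def
proof (intro conjI allI impI)
  fix S T assume S: "lcP X V \<iota> S" and T: "lcP X V \<iota> T"
  show "lcP X V \<iota> (S \<inter> T)" unfolding lcP_def
  proof (intro conjI ballI)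
    show "S \<inter> T \<subseteq> V" using S by (auto simp: lcP_def)
    fix f assume f: "f \<in> S \<inter> T"
    obtain p e where p: "lc_seminorm X V \<iota> p" "e > 0" "{g\<in>V. p (fdiff g f) < e} \<subseteq> S"
      using S f unfolding lcP_def by blast
    obtain q d where q: "lc_seminorm X V \<iota> q" "d > 0" "{g\<in>V. q (fdiff g f) < d} \<subseteq> T"
      using T f unfolding lcP_def by blast
    show "\<exists>p \<epsilon>. lc_seminorm X V \<iota> p \<and> \<epsilon> > 0 \<and> {g\<in>V. p (fdiff g f) < \<epsilon>} \<subseteq> S \<inter> T"
    proof (intro exI conjI)
      show "lc_seminorm X V \<iota> (\<lambda>f. max (p f) (q f))" using lc_max[OF p(1) q(1)] .
      show "min e d > 0" using p(2) q(2) by simp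
      show "{g\<in>V. max (p (fdiff g f)) (q (fdiff g f)) < min e d} \<subseteq> S \<inter> T"
        using p(3) q(3) by auto
    qed
  qed
next
  fix K assume K: "\<forall>S\<in>K. lcP X V \<iota> S"
  show "lcP X V \<iota> (\<Union>K)" unfolding lcP_def
  proof (intro conjI ballI)
    show "\<Union>K \<subseteq> V" using K by (auto simp: lcP_def)
    fix f assume "f \<in> \<Union>K"
    then obtain S where "S \<in> K" "f \<in> S" by blast
    then obtain p e where "lc_seminorm X V \<iota> p" "e > 0" "{g\<in>V. p (fdiff g f) < e} \<subseteq> S"
      using K unfolding lcP_def by blast
    then show "\<exists>p \<epsilon>. lc_seminorm X V \<iota> p \<and> \<epsilon> > 0 \<and> {g\<in>V. p (fdiff g f) < \<epsilon>} \<subseteq> \<Union>K"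
      using \<open>S \<in> K\<close> by blast
  qed
qed

lemma openin_lc: "openin (lc_topology X V \<iota>) = lcP X V \<iota>"
proof -
  have "lc_topology X V \<iota> = topology (lcP X V \<iota>)"
    unfolding lc_topology_def by (rule arg_cong[where f=topology], rule ext, simp add: lcP_def)
  then show ?thesis using topology_inverse'[OF istop_lcP] by simp
qed

lemma topspace_lc: "topspace (lc_topology X V \<iota>) = V"
proof -
  have "lcP X V \<iota> V" unfolding lcP_def
  proof (intro conjI ballI)
    fix f assume "f \<in> V"
    have "{g\<in>V. (\<lambda>f. 0::real) (fdiff g f) < 1} \<subseteq> V" by auto
    then show "\<exists>p \<epsilon>. lc_seminorm X V \<iota> p \<and> \<epsilon> > 0 \<and> {g\<in>V. p (fdiff g f) < \<epsilon>} \<subseteq> V"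
      using lc_zero[of X V \<iota>] zero_less_one by blast
  qed simp
  then show ?thesis unfolding topspace_def openin_lc lcP_def by blast
qed



lemma linear_fdiff:
  assumes "linear_on V T" "\<And>f c. f \<in> V \<Longrightarrow> fscale c f \<in> V" "f \<in> V" "g \<in> V"
  shows "T (fdiff g f) = fdiff (T g) (T f)"
proof -
  have "T (fdiff g f) = T (fadd g (fscale (-1) f))" by (simp add: fadd_fscale_fdiff)
  also have "\<dots> = fadd (T g) (T (fscale (-1) f))" using assms unfolding linear_on_def by blast
  also have "\<dots> = fadd (T g) (fscale (-1) (T f))"
  proof -
    have "T (fscale (-1) f) = fscale (-1) (T f)" using assms(1,3) unfolding linear_on_def by blast
    then show ?thesis by simp
  qed
  finally show ?thesis by (simp add: fadd_fscale_fdiff)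
qed

lemma seminorm_pull:
  assumes "linear_on V1 T" "T ` V1 \<subseteq> V2" "seminorm_on V2 p"
  shows "seminorm_on V1 (p \<circ> T)"
  unfolding seminorm_on_def
proof (intro conjI ballI allI)
  fix f g assume f: "f \<in> V1" and g: "g \<in> V1"
  then have "T (fadd f g) = fadd (T f) (T g)" using assms(1) by (simp add: linear_on_def)
  moreover have "T f \<in> V2" "T g \<in> V2" using f g assms(2) by auto
  ultimately show "(p \<circ> T) (fadd f g) \<le> (p \<circ> T) f + (p \<circ> T) g"
    using assms(3) by (simp add: seminorm_on_def)
next
  fix f c assume f: "f \<in> V1"
  then have "T (fscale c f) = fscale c (T f)" using assms(1) by (simp add: linear_on_def)
  moreover have "T f \<in> V2" using f assms(2) by auto
  ultimately show "(p \<circ> T) (fscale c f) = \<bar>c\<bar> * (p \<circ> T) f"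
    using assms(3) by (simp add: seminorm_on_def)
qed

lemma lc_cont:
  assumes "T ` V1 \<subseteq> V2" "\<forall>f\<in>V1. \<forall>g\<in>V1. T (fdiff g f) = fdiff (T g) (T f)"
    "\<forall>p. lc_seminorm X2 V2 \<iota>2 p \<longrightarrow> lc_seminorm X1 V1 \<iota>1 (p \<circ> T)"
  shows "continuous_map (lc_topology X1 V1 \<iota>1) (lc_topology X2 V2 \<iota>2) T"
  unfolding continuous_map_def topspace_lc openin_lc
proof (intro conjI allI impI)
  show "T \<in> V1 \<rightarrow> V2" using assms(1) by auto
  fix U assume U: "lcP X2 V2 \<iota>2 U"
  show "lcP X1 V1 \<iota>1 {x \<in> V1. T x \<in> U}" unfolding lcP_def
  proof (intro conjI ballI)
    show "{x \<in> V1. T x \<in> U} \<subseteq> V1" by auto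
    fix f assume f: "f \<in> {x \<in> V1. T x \<in> U}"
    have "T f \<in> U" using f by simp
    have UU: "\<forall>h\<in>U. \<exists>p \<epsilon>. lc_seminorm X2 V2 \<iota>2 p \<and> \<epsilon> > 0 \<and> {g\<in>V2. p (fdiff g h) < \<epsilon>} \<subseteq> U"
      using U unfolding lcP_def by (rule conjunct2)
    then obtain p e where p: "lc_seminorm X2 V2 \<iota>2 p" "e > 0" "{g\<in>V2. p (fdiff g (T f)) < e} \<subseteq> U"
      using bspec[OF UU \<open>T f \<in> U\<close>] by auto
    have "{g\<in>V1. (p \<circ> T) (fdiff g f) < e} \<subseteq> {x \<in> V1. T x \<in> U}"
    proof
      fix g assume g: "g \<in> {g\<in>V1. (p \<circ> T) (fdiff g f) < e}"
      have gV: "g \<in> V1" and ge: "p (T (fdiff g f)) < e" using g by auto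
      have fV: "f \<in> V1" using f by simp
      have "T (fdiff g f) = fdiff (T g) (T f)" using assms(2) fV gV by blast
      then have "p (fdiff (T g) (T f)) < e" using ge by simp
      moreover have "T g \<in> V2" using gV assms(1) by blast
      ultimately have "T g \<in> {g\<in>V2. p (fdiff g (T f)) < e}" by simp
      then have "T g \<in> U" using p(3) by (rule subsetD[rotated])
      then show "g \<in> {x \<in> V1. T x \<in> U}" using gV by simp
    qed
    moreover have "lc_seminorm X1 V1 \<iota>1 (p \<circ> T)" using p(1) assms(3) by blast
    ultimately show "\<exists>p \<epsilon>. lc_seminorm X1 V1 \<iota>1 p \<and> \<epsilon> > 0 \<and> {g\<in>V1. p (fdiff g f) < \<epsilon>} \<subseteq> {x \<in> V1. T x \<in> U}"
      using p(2) by blast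
  qed
qed

lemma iso_from:
  assumes sc1: "\<And>f c. f \<in> V1 \<Longrightarrow> fscale c f \<in> V1"
    and sc2: "\<And>f c. f \<in> V2 \<Longrightarrow> fscale c f \<in> V2"
    and lT: "linear_on V1 T" and lS: "linear_on V2 S"
    and TV: "T ` V1 \<subseteq> V2" and SV: "S ` V2 \<subseteq> V1"
    and ST: "\<forall>f\<in>V1. S (T f) = f" and TS: "\<forall>g\<in>V2. T (S g) = g"
    and cT: "\<And>p x. lc_seminorm X2 V2 \<iota>2 p \<Longrightarrow> x \<in> topspace X1 \<Longrightarrow>
               continuous_map X1 euclideanreal (\<lambda>y. p (T (fdiff (\<iota>1 y) (\<iota>1 x))))"
    and cS: "\<And>q x. lc_seminorm X1 V1 \<iota>1 q \<Longrightarrow> x \<in> topspace X2 \<Longrightarrow>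
               continuous_map X2 euclideanreal (\<lambda>y. q (S (fdiff (\<iota>2 y) (\<iota>2 x))))"
  shows "lcs_isomorphic V1 (lc_topology X1 V1 \<iota>1) V2 (lc_topology X2 V2 \<iota>2)"
proof -
  have c1: "continuous_map (lc_topology X1 V1 \<iota>1) (lc_topology X2 V2 \<iota>2) T"
  proof (rule lc_cont[OF TV])
    show "\<forall>f\<in>V1. \<forall>g\<in>V1. T (fdiff g f) = fdiff (T g) (T f)"
      using linear_fdiff[OF lT sc1] by blast
    show "\<forall>p. lc_seminorm X2 V2 \<iota>2 p \<longrightarrow> lc_seminorm X1 V1 \<iota>1 (p \<circ> T)"
      using seminorm_pull[OF lT TV] cT by (auto simp: lc_seminorm_def o_def)
  qed
  have c2: "continuous_map (lc_topology X2 V2 \<iota>2) (lc_topology X1 V1 \<iota>1) S"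
  proof (rule lc_cont[OF SV])
    show "\<forall>f\<in>V2. \<forall>g\<in>V2. S (fdiff g f) = fdiff (S g) (S f)"
      using linear_fdiff[OF lS sc2] by blast
    show "\<forall>p. lc_seminorm X1 V1 \<iota>1 p \<longrightarrow> lc_seminorm X2 V2 \<iota>2 (p \<circ> S)"
      using seminorm_pull[OF lS SV] cS by (auto simp: lc_seminorm_def o_def)
  qed
  have "homeomorphic_maps (lc_topology X1 V1 \<iota>1) (lc_topology X2 V2 \<iota>2) T S"
    unfolding homeomorphic_maps_def topspace_lc using c1 c2 ST TS by blast
  then have "homeomorphic_map (lc_topology X1 V1 \<iota>1) (lc_topology X2 V2 \<iota>2) T"
    using homeomorphic_map_maps by blast
  moreover have "bij_betw T V1 V2" by (rule bij_betw_byWitness[OF ST TS TV SV])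
  ultimately show ?thesis using lT unfolding lcs_isomorphic_def by blast
qed

lemma iso_trans:
  assumes "lcs_isomorphic V1 T1 V2 T2" "lcs_isomorphic V2 T2 V3 T3"
  shows "lcs_isomorphic V1 T1 V3 T3"
proof -
  obtain A where A: "linear_on V1 A" "bij_betw A V1 V2" "homeomorphic_map T1 T2 A"
    using assms(1) unfolding lcs_isomorphic_def by blast
  obtain B where B: "linear_on V2 B" "bij_betw B V2 V3" "homeomorphic_map T2 T3 B"
    using assms(2) unfolding lcs_isomorphic_def by blast
  have AV: "\<And>f. f \<in> V1 \<Longrightarrow> A f \<in> V2" using A(2) bij_betwE by blast
  have "linear_on V1 (B \<circ> A)" unfolding linear_on_def
  proof (intro conjI ballI allI)
    fix f g assume "f \<in> V1" "g \<in> V1"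
    then show "(B \<circ> A) (fadd f g) = fadd ((B \<circ> A) f) ((B \<circ> A) g)"
      using A(1) B(1) AV unfolding linear_on_def by simp
  next
    fix f c assume "f \<in> V1"
    then show "(B \<circ> A) (fscale c f) = fscale c ((B \<circ> A) f)"
      using A(1) B(1) AV unfolding linear_on_def by simp
  qed
  moreover have "bij_betw (B \<circ> A) V1 V3" using A(2) B(2) bij_betw_trans by blast
  moreover have "homeomorphic_map T1 T3 (B \<circ> A)" using A(3) B(3) homeomorphic_map_compose by blast
  ultimately show ?thesis unfolding lcs_isomorphic_def by blast
qed



definition ssum :: "('a \<Rightarrow> real) \<Rightarrow> real" where
  "ssum f = sum f {x. f x \<noteq> 0}"

lemma ssum_eq: "finite F \<Longrightarrow> {x. f x \<noteq> 0} \<subseteq> F \<Longrightarrow> ssum f = sum f F"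
  unfolding ssum_def by (rule sum.mono_neutral_left) auto

lemma fin_supp: "f \<in> fsupp_space A \<Longrightarrow> finite {x. f x \<noteq> 0}"
  by (simp add: fsupp_space_def)

lemma ssum_add: "f \<in> fsupp_space A \<Longrightarrow> g \<in> fsupp_space A \<Longrightarrow> ssum (fadd f g) = ssum f + ssum g"
proof -
  assume f: "f \<in> fsupp_space A" and g: "g \<in> fsupp_space A"
  let ?F = "{x. f x \<noteq> 0} \<union> {x. g x \<noteq> 0}"
  have fin: "finite ?F" using fin_supp[OF f] fin_supp[OF g] by simp
  have "ssum (fadd f g) = sum (fadd f g) ?F" by (rule ssum_eq[OF fin]) (auto simp: fadd_def)
  also have "\<dots> = sum f ?F + sum g ?F" by (simp add: fadd_def sum.distrib)
  also have "\<dots> = ssum f + ssum g" using ssum_eq[OF fin, of f] ssum_eq[OF fin, of g] by auto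
  finally show ?thesis .
qed

lemma ssum_scale: "f \<in> fsupp_space A \<Longrightarrow> ssum (fscale c f) = c * ssum f"
proof -
  assume f: "f \<in> fsupp_space A"
  let ?F = "{x. f x \<noteq> 0}"
  have fin: "finite ?F" using fin_supp[OF f] by simp
  have "ssum (fscale c f) = sum (fscale c f) ?F" by (rule ssum_eq[OF fin]) (auto simp: fscale_def)
  also have "\<dots> = c * sum f ?F" by (simp add: fscale_def sum_distrib_left)
  finally show ?thesis by (simp add: ssum_def)
qed

definition bchange :: "'a \<Rightarrow> 'a \<Rightarrow> ('a \<Rightarrow> real) \<Rightarrow> ('a \<Rightarrow> real)" where
  "bchange a e f = (\<lambda>z. if z = e then 0 else if z = a then - ssum f else f z)"

lemma bchange_lin: "linear_on (fsupp_space A) (bchange a e)"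
  unfolding linear_on_def
proof (intro conjI ballI allI)
  fix f g assume "f \<in> fsupp_space A" "g \<in> fsupp_space A"
  then have h: "ssum (\<lambda>x. f x + g x) = ssum f + ssum g" using ssum_add unfolding fadd_def by blast
  show "bchange a e (fadd f g) = fadd (bchange a e f) (bchange a e g)"
    by (rule ext) (simp add: bchange_def fadd_def h)
next
  fix f c assume "f \<in> fsupp_space A"
  then have h: "ssum (\<lambda>x. c * f x) = c * ssum f" using ssum_scale unfolding fscale_def by blast
  show "bchange a e (fscale c f) = fscale c (bchange a e f)"
    by (rule ext) (simp add: bchange_def fscale_def h)
qed

lemma bchange_maps:
  assumes "a \<in> A" "f \<in> fsupp_space (A - {a})"
  shows "bchange a e f \<in> fsupp_space (A - {e})"
proof -
  have s: "{x. bchange a e f x \<noteq> 0} \<subseteq> insert a {x. f x \<noteq> 0}" by (auto simp: bchange_def)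
  have "finite {x. bchange a e f x \<noteq> 0}" using fin_supp[OF assms(2)] by (rule finite_subset[OF s, simplified])
  moreover have "{x. bchange a e f x \<noteq> 0} \<subseteq> A - {e}"
    using assms unfolding fsupp_space_def bchange_def by (auto split: if_splits)
  ultimately show ?thesis by (simp add: fsupp_space_def)
qed

lemma bchange_inv:
  assumes "a \<in> A" "e \<in> A" "f \<in> fsupp_space (A - {a})"
  shows "bchange e a (bchange a e f) = f"
proof (cases "a = e")
  case True
  have "f a = 0" using assms(3) by (auto simp: fsupp_space_def)
  then show ?thesis using True by (auto simp: bchange_def)
next
  case False
  have fa: "f a = 0" using assms(3) by (auto simp: fsupp_space_def)
  let ?F = "insert a (insert e {x. f x \<noteq> 0})"
  have fin: "finite ?F" using fin_supp[OF assms(3)] by simp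
  let ?B = "bchange a e f"
  have "ssum ?B = sum ?B ?F" by (rule ssum_eq[OF fin]) (auto simp: bchange_def)
  also have "\<dots> = ?B a + ?B e + sum ?B (?F - {a} - {e})"
  proof -
    have "sum ?B ?F = ?B a + sum ?B (?F - {a})" by (rule sum.remove[OF fin]) simp
    moreover have "sum ?B (?F - {a}) = ?B e + sum ?B (?F - {a} - {e})"
      by (rule sum.remove) (use fin False in auto)
    ultimately show ?thesis by simp
  qed
  also have "sum ?B (?F - {a} - {e}) = sum f (?F - {a} - {e})"
    by (rule sum.cong) (auto simp: bchange_def)
  also have "sum f (?F - {a} - {e}) = sum f ?F - f a - f e"
  proof -
    have "sum f ?F = f a + sum f (?F - {a})" by (rule sum.remove[OF fin]) simp
    moreover have "sum f (?F - {a}) = f e + sum f (?F - {a} - {e})"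
      by (rule sum.remove) (use fin False in auto)
    ultimately show ?thesis by simp
  qed
  also have "sum f ?F = ssum f" by (rule ssum_eq[OF fin, symmetric]) auto
  finally have "ssum ?B = - f e" using False fa by (simp add: bchange_def)
  then show ?thesis using False fa by (auto simp: bchange_def)
qed

lemma ssum_zero: "ssum (\<lambda>x. 0) = 0" by (simp add: ssum_def)

lemma ssum_delta: "ssum (delta y) = 1"
proof -
  have "ssum (delta y) = sum (delta y) {y}" by (rule ssum_eq) (auto simp: delta_def)
  then show ?thesis by (simp add: delta_def)
qed

lemma bchange_gd:
  "bchange a e (graev_delta a y) = fdiff (graev_delta e y) (graev_delta e a)"
  apply (rule ext)
  apply (simp add: bchange_def graev_delta_def fdiff_def ssum_zero ssum_delta)
  apply (simp add: delta_def)
  done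

lemma gd_mem: "y \<in> A \<Longrightarrow> graev_delta a y \<in> fsupp_space (A - {a})"
proof -
  assume "y \<in> A"
  have "{x. graev_delta a y x \<noteq> 0} \<subseteq> {y}" by (auto simp: graev_delta_def delta_def)
  moreover have "{x. graev_delta a y x \<noteq> 0} \<subseteq> A - {a}" using \<open>y \<in> A\<close>
    by (auto simp: graev_delta_def delta_def split: if_splits)
  ultimately show ?thesis unfolding fsupp_space_def using finite_subset by blast
qed

lemma bchange_diff:
  assumes "a \<in> A" "x \<in> A" "y \<in> A"
  shows "bchange a e (fdiff (graev_delta a y) (graev_delta a x)) = fdiff (graev_delta e y) (graev_delta e x)"
proof -
  have "bchange a e (fdiff (graev_delta a y) (graev_delta a x)) =
        fdiff (bchange a e (graev_delta a y)) (bchange a e (graev_delta a x))"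
    by (rule linear_fdiff[OF bchange_lin fsupp_scale gd_mem[OF assms(2)] gd_mem[OF assms(3)]])
  then show ?thesis by (simp add: bchange_gd fdiff_def)
qed

lemma base_change_iso:
  assumes "a \<in> topspace X" "e \<in> topspace X"
  shows "lcs_isomorphic (graev_lcs_carrier X a) (graev_lcs X a) (graev_lcs_carrier X e) (graev_lcs X e)"
  unfolding graev_lcs_def graev_lcs_carrier_def
proof (rule iso_from[OF fsupp_scale fsupp_scale bchange_lin bchange_lin])
  show "bchange a e ` fsupp_space (topspace X - {a}) \<subseteq> fsupp_space (topspace X - {e})"
    using bchange_maps[OF assms(1)] by (intro image_subsetI)
  show "bchange e a ` fsupp_space (topspace X - {e}) \<subseteq> fsupp_space (topspace X - {a})"
    using bchange_maps[OF assms(2)] by (intro image_subsetI)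
  show "\<forall>f\<in>fsupp_space (topspace X - {a}). bchange e a (bchange a e f) = f"
    using bchange_inv[OF assms(1,2)] by (intro ballI)
  show "\<forall>f\<in>fsupp_space (topspace X - {e}). bchange a e (bchange e a f) = f"
    using bchange_inv[OF assms(2,1)] by (intro ballI)
  fix p x assume p: "lc_seminorm X (fsupp_space (topspace X - {e})) (graev_delta e) p" and x: "x \<in> topspace X"
  have "continuous_map X euclideanreal (\<lambda>y. p (fdiff (graev_delta e y) (graev_delta e x)))"
    using p x by (simp add: lc_seminorm_def)
  then show "continuous_map X euclideanreal (\<lambda>y. p (bchange a e (fdiff (graev_delta a y) (graev_delta a x))))"
    by (rule continuous_map_eq) (simp add: bchange_diff[OF assms(1) x])
next
  fix p x assume p: "lc_seminorm X (fsupp_space (topspace X - {a})) (graev_delta a) p" and x: "x \<in> topspace X"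
  have "continuous_map X euclideanreal (\<lambda>y. p (fdiff (graev_delta a y) (graev_delta a x)))"
    using p x by (simp add: lc_seminorm_def)
  then show "continuous_map X euclideanreal (\<lambda>y. p (bchange e a (fdiff (graev_delta e y) (graev_delta e x))))"
    by (rule continuous_map_eq) (simp add: bchange_diff[OF assms(2) x])
qed



definition sg :: "real \<Rightarrow> real" where "sg y = y / (1 + y)"
definition tu :: "real \<Rightarrow> real" where "tu z = z / (1 - z)"

lemma cs_mem: "x \<in> conv_seq \<longleftrightarrow> x = 0 \<or> (\<exists>n::nat. n \<ge> 1 \<and> x = 1 / real n)"
  by (auto simp: conv_seq_def)

lemma cs_nonneg: "x \<in> conv_seq \<Longrightarrow> x \<ge> 0"
  by (auto simp: cs_mem)

lemma cs_0: "0 \<in> conv_seq" and cs_1: "1 \<in> conv_seq"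
  by (auto simp: cs_mem intro: exI[of _ 1])

lemma cs_le_half: "x \<in> conv_seq \<Longrightarrow> x \<noteq> 1 \<Longrightarrow> x \<le> 1/2"
proof -
  assume "x \<in> conv_seq" "x \<noteq> 1"
  then consider "x = 0" | n::nat where "n \<ge> 1" "x = 1 / real n" by (auto simp: cs_mem)
  then show ?thesis
  proof cases
    case 2
    then have "n \<noteq> 1" using \<open>x \<noteq> 1\<close> by auto
    then have "real n \<ge> 2" using 2 by linarith
    then have "1 / real n \<le> 1 / 2" by (intro divide_left_mono) auto
    then show ?thesis using 2 by simp
  qed simp
qed

lemma sg_mem: "y \<in> conv_seq \<Longrightarrow> sg y \<in> conv_seq"
proof -
  assume "y \<in> conv_seq"
  then consider "y = 0" | n::nat where "n \<ge> 1" "y = 1 / real n" by (auto simp: cs_mem)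
  then show ?thesis
  proof cases
    case 1 then show ?thesis by (simp add: sg_def cs_0)
  next
    case 2
    have "real n > 0" using 2 by simp
    then have "sg y = 1 / real (Suc n)" unfolding 2(2) sg_def by (simp add: field_simps)
    then show ?thesis unfolding cs_mem by (intro disjI2 exI[of _ "Suc n"]) simp
  qed
qed

lemma sg_ne1: "y \<in> conv_seq \<Longrightarrow> sg y \<noteq> 1"
  using cs_nonneg[of y] by (auto simp: sg_def field_simps)

lemma tu_mem: "z \<in> conv_seq \<Longrightarrow> z \<noteq> 1 \<Longrightarrow> tu z \<in> conv_seq"
proof -
  assume "z \<in> conv_seq" "z \<noteq> 1"
  then consider "z = 0" | n::nat where "n \<ge> 1" "z = 1 / real n" by (auto simp: cs_mem)
  then show ?thesis
  proof cases
    case 1 then show ?thesis by (simp add: tu_def cs_0)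
  next
    case 2
    then have "n \<noteq> 1" using \<open>z \<noteq> 1\<close> by auto
    then obtain m where m: "n = Suc m" "m \<ge> 1" using 2 by (cases n) auto
    have "real m > 0" using m by simp
    then have "tu z = 1 / real m" unfolding 2(2) tu_def m(1) by (simp add: field_simps)
    then show ?thesis unfolding cs_mem using m by blast
  qed
qed

lemma tu_sg: "y \<noteq> -1 \<Longrightarrow> tu (sg y) = y"
proof -
  assume "y \<noteq> -1"
  then have "1 + y \<noteq> 0" by linarith
  then show ?thesis by (simp add: tu_def sg_def field_simps)
qed

lemma sg_tu: "z \<noteq> 1 \<Longrightarrow> sg (tu z) = z"
proof -
  assume "z \<noteq> 1"
  then have "1 - z \<noteq> 0" by linarith
  then show ?thesis by (simp add: tu_def sg_def field_simps)
qed

lemma sg_ne1': "y \<noteq> -1 \<Longrightarrow> sg y \<noteq> 1"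
  by (auto simp: sg_def field_simps)

lemma tu_ne: "z \<noteq> 1 \<Longrightarrow> tu z \<noteq> -1"
  by (auto simp: tu_def field_simps)

lemma cs_not_m1: "(-1::real) \<notin> conv_seq"
  using cs_nonneg by force



lemma strongK:
  assumes sn: "seminorm_on (fsupp_space A) p"
    and iV: "\<And>y. y \<in> S \<Longrightarrow> \<iota> y \<in> fsupp_space A"
    and w: "w \<in> fsupp_space A"
    and cont: "\<And>x. x \<in> S \<Longrightarrow> continuous_on S (\<lambda>y. p (fdiff (\<iota> y) (\<iota> x)))"
  shows "continuous_on S (\<lambda>y. p (fadd (\<iota> y) w))"
  unfolding continuous_on_def
proof (intro ballI)
  fix y0 assume y0: "y0 \<in> S"
  let ?g = "\<lambda>y. p (fadd (\<iota> y) w)"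
  let ?h = "\<lambda>y. p (fdiff (\<iota> y) (\<iota> y0))"
  have "(?h \<longlongrightarrow> ?h y0) (at y0 within S)" using cont[OF y0] y0 unfolding continuous_on_def by blast
  moreover have "?h y0 = 0"
  proof -
    have "fdiff (\<iota> y0) (\<iota> y0) = fscale 0 (\<iota> y0)" by (auto simp: fdiff_def fscale_def)
    then show ?thesis using sn iV[OF y0] by (simp add: seminorm_on_def)
  qed
  ultimately have h0: "(?h \<longlongrightarrow> 0) (at y0 within S)" by simp
  have bd: "norm (?g y - ?g y0) \<le> ?h y" if y: "y \<in> S" for y
  proof -
    have d1: "fdiff (\<iota> y) (\<iota> y0) \<in> fsupp_space A" using fsupp_diff iV y y0 by blast
    have d2: "fdiff (\<iota> y0) (\<iota> y) \<in> fsupp_space A" using fsupp_diff iV y y0 by blast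
    have a1: "fadd (\<iota> y0) w \<in> fsupp_space A" using fsupp_add iV y0 w by blast
    have a2: "fadd (\<iota> y) w \<in> fsupp_space A" using fsupp_add iV y w by blast
    have e1: "fadd (\<iota> y) w = fadd (fdiff (\<iota> y) (\<iota> y0)) (fadd (\<iota> y0) w)"
      by (auto simp: fadd_def fdiff_def)
    have e2: "fadd (\<iota> y0) w = fadd (fdiff (\<iota> y0) (\<iota> y)) (fadd (\<iota> y) w)"
      by (auto simp: fadd_def fdiff_def)
    have e3: "fdiff (\<iota> y0) (\<iota> y) = fscale (-1) (fdiff (\<iota> y) (\<iota> y0))"
      by (auto simp: fscale_def fdiff_def)
    have "?g y \<le> ?h y + ?g y0" using sn d1 a1 unfolding seminorm_on_def e1 by auto
    moreover have "?g y0 \<le> p (fdiff (\<iota> y0) (\<iota> y)) + ?g y"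
      using sn d2 a2 unfolding seminorm_on_def by (metis e2)
    moreover have "p (fdiff (\<iota> y0) (\<iota> y)) = ?h y"
      using sn d1 unfolding seminorm_on_def e3 by simp
    ultimately show ?thesis by simp
  qed
  have "((\<lambda>y. ?g y - ?g y0) \<longlongrightarrow> 0) (at y0 within S)"
    by (rule Lim_null_comparison[OF _ h0]) (use bd in \<open>auto simp: eventually_at_filter\<close>)
  then show "(?g \<longlongrightarrow> ?g y0) (at y0 within S)" by (rule LIM_zero_cancel)
qed

lemma iso_ext1:
  assumes "continuous_on (conv_seq - {1}) F"
  shows "continuous_on conv_seq F"
proof -
  have eq: "conv_seq = (conv_seq - {1}) \<union> {1}" using cs_1 by auto
  have c1: "closedin (top_of_set conv_seq) (conv_seq - {1})"
  proof -
    have "conv_seq - {1} = conv_seq \<inter> {..1/2}" using cs_le_half by force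
    then show ?thesis unfolding closedin_closed by (intro exI[of _ "{..1/2}"]) auto
  qed
  have c2: "closedin (top_of_set conv_seq) {1}"
    unfolding closedin_closed using cs_1 by (intro exI[of _ "{1}"]) auto
  have "continuous_on ((conv_seq - {1}) \<union> {1}) F"
    by (rule continuous_on_Un_local) (use c1 c2 eq assms in auto)
  then show ?thesis using eq by simp
qed

definition rT :: "(real \<Rightarrow> real) \<Rightarrow> (real \<Rightarrow> real)" where
  "rT f = (\<lambda>z. if z = 1 then 0 else f (tu z))"
definition rS :: "(real \<Rightarrow> real) \<Rightarrow> (real \<Rightarrow> real)" where
  "rS g = (\<lambda>y. if y = -1 then 0 else g (sg y))"

lemma rT_lin: "linear_on V rT"
  unfolding linear_on_def by (auto simp: rT_def fadd_def fscale_def)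
lemma rS_lin: "linear_on V rS"
  unfolding linear_on_def by (auto simp: rS_def fadd_def fscale_def)

lemma rT_maps: "f \<in> fsupp_space conv_seq \<Longrightarrow> rT f \<in> fsupp_space (conv_seq - {1})"
proof -
  assume f: "f \<in> fsupp_space conv_seq"
  have s: "{z. rT f z \<noteq> 0} \<subseteq> sg ` {x. f x \<noteq> 0}"
  proof
    fix z assume "z \<in> {z. rT f z \<noteq> 0}"
    then have "z \<noteq> 1" "f (tu z) \<noteq> 0" by (auto simp: rT_def split: if_splits)
    then show "z \<in> sg ` {x. f x \<noteq> 0}" using sg_tu by (metis (mono_tags) image_eqI mem_Collect_eq)
  qed
  have s2: "{z. rT f z \<noteq> 0} \<subseteq> conv_seq - {1}"
  proof
    fix z assume "z \<in> {z. rT f z \<noteq> 0}"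
    then have z: "z \<noteq> 1" "f (tu z) \<noteq> 0" by (auto simp: rT_def split: if_splits)
    then have "tu z \<in> conv_seq" using f by (auto simp: fsupp_space_def)
    then have "sg (tu z) \<in> conv_seq" by (rule sg_mem)
    then show "z \<in> conv_seq - {1}" using z sg_tu by simp
  qed
  have "finite {z. rT f z \<noteq> 0}" using finite_subset[OF s] fin_supp[OF f] by blast
  then show ?thesis using s2 by (simp add: fsupp_space_def)
qed

lemma rS_maps: "g \<in> fsupp_space (conv_seq - {1}) \<Longrightarrow> rS g \<in> fsupp_space conv_seq"
proof -
  assume g: "g \<in> fsupp_space (conv_seq - {1})"
  have s: "{z. rS g z \<noteq> 0} \<subseteq> tu ` {x. g x \<noteq> 0}"
  proof
    fix z assume "z \<in> {z. rS g z \<noteq> 0}"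
    then have "z \<noteq> -1" "g (sg z) \<noteq> 0" by (auto simp: rS_def split: if_splits)
    then show "z \<in> tu ` {x. g x \<noteq> 0}" using tu_sg by (metis (mono_tags) image_eqI mem_Collect_eq)
  qed
  have s2: "{z. rS g z \<noteq> 0} \<subseteq> conv_seq"
  proof
    fix z assume "z \<in> {z. rS g z \<noteq> 0}"
    then have z: "z \<noteq> -1" "g (sg z) \<noteq> 0" by (auto simp: rS_def split: if_splits)
    then have "sg z \<in> conv_seq" "sg z \<noteq> 1" using g by (auto simp: fsupp_space_def)
    then have "tu (sg z) \<in> conv_seq" by (rule tu_mem)
    then show "z \<in> conv_seq" using z tu_sg by simp
  qed
  have "finite {z. rS g z \<noteq> 0}" using finite_subset[OF s] fin_supp[OF g] by blast
  then show ?thesis using s2 by (simp add: fsupp_space_def)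
qed

lemma rST: "f \<in> fsupp_space conv_seq \<Longrightarrow> rS (rT f) = f"
proof (rule ext)
  fix y assume f: "f \<in> fsupp_space conv_seq"
  show "rS (rT f) y = f y"
  proof (cases "y = -1")
    case True
    then have "f y = 0" using f cs_not_m1 by (auto simp: fsupp_space_def)
    then show ?thesis using True by (simp add: rS_def)
  qed (simp add: rS_def rT_def sg_ne1' tu_sg)
qed

lemma rTS: "g \<in> fsupp_space (conv_seq - {1}) \<Longrightarrow> rT (rS g) = g"
proof (rule ext)
  fix z assume g: "g \<in> fsupp_space (conv_seq - {1})"
  show "rT (rS g) z = g z"
  proof (cases "z = 1")
    case True
    then have "g z = 0" using g by (auto simp: fsupp_space_def)
    then show ?thesis using True by (simp add: rT_def)
  qed (simp add: rS_def rT_def tu_ne sg_tu)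
qed

lemma eqv: "z \<noteq> 1 \<Longrightarrow> y \<noteq> -1 \<Longrightarrow> (tu z = y) = (z = sg y)"
  by (metis sg_tu tu_sg)

lemma sg_cont: "continuous_on conv_seq sg"
  unfolding sg_def
  by (intro continuous_intros) (use cs_nonneg in force)

lemma tu_cont: "continuous_on (conv_seq - {1}) tu"
  unfolding tu_def by (intro continuous_intros) auto


lemma topX: "topspace (subtopology euclideanreal conv_seq) = conv_seq" by simp

lemma relabel_iso:
  "lcs_isomorphic
           (free_lcs_carrier (subtopology euclideanreal conv_seq))
           (free_lcs (subtopology euclideanreal conv_seq))
           (graev_lcs_carrier (subtopology euclideanreal conv_seq) 1)
           (graev_lcs (subtopology euclideanreal conv_seq) 1)"
  unfolding free_lcs_def graev_lcs_def graev_lcs_carrier_def free_lcs_carrier_def topX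
proof (rule iso_from[OF fsupp_scale fsupp_scale rT_lin rS_lin])
  show "rT ` fsupp_space conv_seq \<subseteq> fsupp_space (conv_seq - {1})" using rT_maps by (intro image_subsetI)
  show "rS ` fsupp_space (conv_seq - {1}) \<subseteq> fsupp_space conv_seq" using rS_maps by (intro image_subsetI)
  show "\<forall>f\<in>fsupp_space conv_seq. rS (rT f) = f" using rST by (intro ballI)
  show "\<forall>f\<in>fsupp_space (conv_seq - {1}). rT (rS f) = f" using rTS by (intro ballI)
next
  fix p x
  assume p: "lc_seminorm (subtopology euclideanreal conv_seq) (fsupp_space (conv_seq - {1})) (graev_delta 1) p"
    and x: "x \<in> topspace (subtopology euclideanreal conv_seq)"
  have xc: "x \<in> conv_seq" using x by simp
  have sx: "sg x \<in> conv_seq" by (rule sg_mem[OF xc])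
  have hc: "continuous_on conv_seq (\<lambda>w. p (fdiff (graev_delta 1 w) (graev_delta 1 (sg x))))"
    using p sx by (simp add: lc_seminorm_def)
  have "continuous_on conv_seq ((\<lambda>w. p (fdiff (graev_delta 1 w) (graev_delta 1 (sg x)))) \<circ> sg)"
    by (rule continuous_on_compose[OF sg_cont]) (use hc sg_mem in \<open>auto intro: continuous_on_subset\<close>)
  moreover have "rT (fdiff (delta y) (delta x)) = fdiff (graev_delta 1 (sg y)) (graev_delta 1 (sg x))"
    if y: "y \<in> conv_seq" for y
  proof (rule ext)
    fix z
    have yn: "y \<noteq> -1" "x \<noteq> -1" using y xc cs_not_m1 by auto
    show "rT (fdiff (delta y) (delta x)) z = fdiff (graev_delta 1 (sg y)) (graev_delta 1 (sg x)) z"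
      using sg_ne1[OF y] sg_ne1[OF xc] eqv[of z y] eqv[of z x] yn
      by (auto simp: rT_def fdiff_def graev_delta_def delta_def)
  qed
  ultimately have "continuous_on conv_seq (\<lambda>y. p (rT (fdiff (delta y) (delta x))))"
    by (auto simp: o_def intro: continuous_on_eq)
  then show "continuous_map (subtopology euclideanreal conv_seq) euclideanreal
          (\<lambda>y. p (rT (fdiff (delta y) (delta x))))" by simp
next
  fix q x
  assume q: "lc_seminorm (subtopology euclideanreal conv_seq) (fsupp_space conv_seq) delta q"
    and x: "x \<in> topspace (subtopology euclideanreal conv_seq)"
  have xc: "x \<in> conv_seq" using x by simp
  define w where "w = rS (fscale (-1) (graev_delta 1 x))"
  have w: "w \<in> fsupp_space conv_seq" unfolding w_def
    by (intro rS_maps fsupp_scale gd_mem xc)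
  have dm: "\<And>y. y \<in> conv_seq \<Longrightarrow> delta y \<in> fsupp_space conv_seq"
    by (auto simp: fsupp_space_def delta_def)
  have K: "continuous_on conv_seq (\<lambda>u. q (fadd (delta u) w))"
    by (rule strongK[OF _ dm w]) (use q in \<open>auto simp: lc_seminorm_def\<close>)
  have cc: "continuous_on (conv_seq - {1}) ((\<lambda>u. q (fadd (delta u) w)) \<circ> tu)"
    by (rule continuous_on_compose[OF tu_cont]) (use K tu_mem in \<open>auto intro: continuous_on_subset\<close>)
  have eq: "rS (fdiff (graev_delta 1 y) (graev_delta 1 x)) = fadd (delta (tu y)) w"
    if y: "y \<in> conv_seq - {1}" for y
  proof (rule ext)
    fix u
    have ty: "tu y \<in> conv_seq" using y tu_mem by auto
    then have tyn: "tu y \<noteq> -1" using cs_not_m1 by auto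
    show "rS (fdiff (graev_delta 1 y) (graev_delta 1 x)) u = fadd (delta (tu y)) w u"
    proof (cases "u = -1")
      case True
      then show ?thesis using y tyn
        by (auto simp: w_def rS_def fdiff_def fadd_def fscale_def graev_delta_def delta_def)
    next
      case False
      then have "(sg u = y) = (u = tu y)" using eqv[of y u] y by auto
      then show ?thesis using y False
        by (simp add: w_def rS_def fdiff_def fadd_def fscale_def graev_delta_def delta_def)
    qed
  qed
  have "continuous_on (conv_seq - {1}) (\<lambda>y. q (rS (fdiff (graev_delta 1 y) (graev_delta 1 x))))"
  proof (rule continuous_on_eq[OF cc])
    fix y assume "y \<in> conv_seq - {1}"
    then show "((\<lambda>u. q (fadd (delta u) w)) \<circ> tu) y = q (rS (fdiff (graev_delta 1 y) (graev_delta 1 x)))"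
      using eq by simp
  qed
  then have "continuous_on conv_seq (\<lambda>y. q (rS (fdiff (graev_delta 1 y) (graev_delta 1 x))))"
    by (rule iso_ext1)
  then show "continuous_map (subtopology euclideanreal conv_seq) euclideanreal
          (\<lambda>y. q (rS (fdiff (graev_delta 1 y) (graev_delta 1 x))))" by simp
qed

theorem mainTheorem2:
  assumes "e \<in> conv_seq"
  shows "lcs_isomorphic
           (free_lcs_carrier (subtopology euclideanreal conv_seq))
           (free_lcs (subtopology euclideanreal conv_seq))
           (graev_lcs_carrier (subtopology euclideanreal conv_seq) e)
           (graev_lcs (subtopology euclideanreal conv_seq) e)"
proof (rule iso_trans[OF relabel_iso])
  show "lcs_isomorphic (graev_lcs_carrier (subtopology euclideanreal conv_seq) 1)
     (graev_lcs (subtopology euclideanreal conv_seq) 1)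
     (graev_lcs_carrier (subtopology euclideanreal conv_seq) e)
     (graev_lcs (subtopology euclideanreal conv_seq) e)"
    by (rule base_change_iso) (use assms cs_1 in simp_all)
qed


end
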